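(* Let $\mathcal{G}$ be a finite groupoid and let $\mathcal{H}$ be a connected wide subgroupoid of $\mathcal{G}$. Then $\mathbb{C}[\mathcal{G}/\mathcal{H}]\cong\mathrm{Ind}^\mathcal{G}_\mathcal{H}\mathrm{Tri}$ as functors $\mathcal{G}\to\mathbf{vect}$.
   Context: A groupoid is a category in which every morphism is invertible; all groupoids are finite and nonempty; $gg'$ denotes composition. A subgroupoid is wide if it contains all objects, connected if any two of its objects are joined by one of its morphisms. For $x\in\mathcal{G}_0$ let $\mathrm{Mor}_\mathcal{G}(-,x):=\coprod_{y\in\mathcal{G}_0}\mathcal{G}(y,x)$, with the equivalence relation $a\sim_{\mathcal{H},x}b\iff a^{-1}b\in\mathcal{H}_1$; write $a\mathcal{H}$ for the class of $a$. The $\mathcal{G}$-set $\mathcal{G}/\mathcal{H}:\mathcal{G}\to\mathbf{set}$ sends $x$ to $\mathrm{Mor}_\mathcal{G}(-,x)/\sim_{\mathcal{H},x}$ and $g:x\to y$ to $a\mathcal{H}\mapsto ga\mathcal{H}$. $\mathbf{vect}$ is the category of finite-dimensional complex vector spaces; $F:\mathbf{set}\to\mathbf{vect}$ is the free vector space functor (left adjoint of the forgetful functor), and for a $\mathcal{G}$-set $X$, $\mathbb{C}[X]:=F\circ X$. $\mathrm{Tri}:\mathcal{H}\to\mathbf{vect}$ is the trivial representation ($x\mapsto\mathbb{C}$, morphisms $\mapsto\mathrm{id}_\mathbb{C}$), and $\mathrm{Ind}^\mathcal{G}_\mathcal{H}:\mathbf{vect}^\mathcal{H}\to\mathbf{vect}^\mathcal{G}$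 is the left adjoint of restriction along the inclusion $\mathcal{H}\hookrightarrow\mathcal{G}$ (left Kan extension along the inclusion). *)

theory Defs
  imports Complex_Main "Jordan_Normal_Form.Matrix"
begin

text \<open>A (small) category presented by its object set, arrow set, source, target,
  composition and identities.  comp g h is the composite gh (first h, then g),
  defined when dom g = cod h.\<close>

record ('o, 'm) groupoid =
  Obj  :: "'o set"
  Arr  :: "'m set"
  dom  :: "'m \<Rightarrow> 'o"
  cod  :: "'m \<Rightarrow> 'o"
  comp :: "'m \<Rightarrow> 'm \<Rightarrow> 'm"
  ide  :: "'o \<Rightarrow> 'm"

definition is_finite_groupoid :: "('o, 'm) groupoid \<Rightarrow> bool" where
  "is_finite_groupoid G \<longleftrightarrow>
     finite (Obj G) \<and> finite (Arr G) \<and> Obj G \<noteq> {} \<and>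
     (\<forall>g\<in>Arr G. dom G g \<in> Obj G \<and> cod G g \<in> Obj G) \<and>
     (\<forall>x\<in>Obj G. ide G x \<in> Arr G \<and> dom G (ide G x) = x \<and> cod G (ide G x) = x) \<and>
     (\<forall>g\<in>Arr G. \<forall>h\<in>Arr G. dom G g = cod G h \<longrightarrow>
        comp G g h \<in> Arr G \<and> dom G (comp G g h) = dom G h \<and> cod G (comp G g h) = cod G g) \<and>
     (\<forall>g\<in>Arr G. \<forall>h\<in>Arr G. \<forall>k\<in>Arr G. dom G g = cod G h \<longrightarrow> dom G h = cod G k \<longrightarrow>
        comp G (comp G g h) k = comp G g (comp G h k)) \<and>
     (\<forall>g\<in>Arr G. comp G (ide G (cod G g)) g = g \<and> comp G g (ide G (dom G g)) = g) \<and>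
     (\<forall>g\<in>Arr G. \<exists>h\<in>Arr G. dom G h = cod G g \<and> cod G h = dom G g \<and>
        comp G h g = ide G (dom G g) \<and> comp G g h = ide G (cod G g))"

definition ginv :: "('o, 'm) groupoid \<Rightarrow> 'm \<Rightarrow> 'm" where
  "ginv G g = (THE h. h \<in> Arr G \<and> dom G h = cod G g \<and> cod G h = dom G g \<and>
        comp G h g = ide G (dom G g) \<and> comp G g h = ide G (cod G g))"

text \<open>A subgroupoid is given by its set of arrows S (its objects are the
  sources/targets of its arrows).\<close>

definition is_subgroupoid :: "('o, 'm) groupoid \<Rightarrow> 'm set \<Rightarrow> bool" where
  "is_subgroupoid G S \<longleftrightarrow> S \<subseteq> Arr G \<and>
     (\<forall>h\<in>S. ide G (dom G h) \<in> S \<and> ide G (cod G h) \<in> S) \<and>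
     (\<forall>g\<in>S. \<forall>h\<in>S. dom G g = cod G h \<longrightarrow> comp G g h \<in> S) \<and>
     (\<forall>h\<in>S. ginv G h \<in> S)"

definition is_wide_subgroupoid :: "('o, 'm) groupoid \<Rightarrow> 'm set \<Rightarrow> bool" where
  "is_wide_subgroupoid G S \<longleftrightarrow> is_subgroupoid G S \<and> (\<forall>x\<in>Obj G. ide G x \<in> S)"

definition sub_objects :: "('o, 'm) groupoid \<Rightarrow> 'm set \<Rightarrow> 'o set" where
  "sub_objects G S = dom G ` S \<union> cod G ` S"

definition is_connected_subgroupoid :: "('o, 'm) groupoid \<Rightarrow> 'm set \<Rightarrow> bool" where
  "is_connected_subgroupoid G S \<longleftrightarrow> is_subgroupoid G S \<and>
     (\<forall>x\<in>sub_objects G S. \<forall>y\<in>sub_objects G S. \<exists>h\<in>S. dom G h = x \<and> cod G h = y)"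

definition Mor_to :: "('o, 'm) groupoid \<Rightarrow> 'o \<Rightarrow> 'm set" where
  "Mor_to G x = {a \<in> Arr G. cod G a = x}"

definition left_class :: "('o, 'm) groupoid \<Rightarrow> 'm set \<Rightarrow> 'o \<Rightarrow> 'm \<Rightarrow> 'm set" where
  "left_class G S x a = {b \<in> Mor_to G x. comp G (ginv G a) b \<in> S}"

definition quot_set :: "('o, 'm) groupoid \<Rightarrow> 'm set \<Rightarrow> 'o \<Rightarrow> 'm set set" where
  "quot_set G S x = left_class G S x ` Mor_to G x"

text \<open>Action of g : x -> y on classes: aH |-> gaH (which is the image g.(aH)).\<close>
definition quot_act :: "('o, 'm) groupoid \<Rightarrow> 'm set \<Rightarrow> 'm \<Rightarrow> 'm set \<Rightarrow> 'm set" where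
  "quot_act G S g c = left_class G S (cod G g) (comp G g (SOME a. a \<in> c))"

text \<open>vect is modelled by its skeleton: a finite-dimensional complex vector space is
  C^n (given by n), a linear map C^n -> C^m is an m x n complex matrix.  A
  representation of the groupoid restricted to arrow set A (A = Arr G for G,
  A = S for a wide subgroupoid H) assigns a dimension to every object and a
  matrix to every arrow, functorially.\<close>

definition is_rep :: "('o, 'm) groupoid \<Rightarrow> 'm set \<Rightarrow> ('o \<Rightarrow> nat) \<Rightarrow> ('m \<Rightarrow> complex mat) \<Rightarrow> bool" where
  "is_rep G A d \<rho> \<longleftrightarrow>
     (\<forall>g\<in>A. \<rho> g \<in> carrier_mat (d (cod G g)) (d (dom G g))) \<and>
     (\<forall>x\<in>Obj G. ide G x \<in> A \<longrightarrow> \<rho> (ide G x) = 1\<^sub>m (d x)) \<and>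
     (\<forall>g\<in>A. \<forall>h\<in>A. dom G g = cod G h \<longrightarrow> \<rho> (comp G g h) = \<rho> g * \<rho> h)"

definition is_nat_trans :: "('o, 'm) groupoid \<Rightarrow> 'm set \<Rightarrow> ('o \<Rightarrow> nat) \<Rightarrow> ('m \<Rightarrow> complex mat)
    \<Rightarrow> ('o \<Rightarrow> nat) \<Rightarrow> ('m \<Rightarrow> complex mat) \<Rightarrow> ('o \<Rightarrow> complex mat) \<Rightarrow> bool" where
  "is_nat_trans G A d1 \<rho>1 d2 \<rho>2 \<tau> \<longleftrightarrow>
     (\<forall>x\<in>Obj G. \<tau> x \<in> carrier_mat (d2 x) (d1 x)) \<and>
     (\<forall>g\<in>A. \<tau> (cod G g) * \<rho>1 g = \<rho>2 g * \<tau> (dom G g))"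

definition reps_iso :: "('o, 'm) groupoid \<Rightarrow> 'm set \<Rightarrow> ('o \<Rightarrow> nat) \<Rightarrow> ('m \<Rightarrow> complex mat)
    \<Rightarrow> ('o \<Rightarrow> nat) \<Rightarrow> ('m \<Rightarrow> complex mat) \<Rightarrow> bool" where
  "reps_iso G A d1 \<rho>1 d2 \<rho>2 \<longleftrightarrow>
     (\<exists>\<tau>. is_nat_trans G A d1 \<rho>1 d2 \<rho>2 \<tau> \<and> (\<forall>x\<in>Obj G. invertible_mat (\<tau> x)))"

definition tri_dim :: "'o \<Rightarrow> nat" where "tri_dim x = 1"
definition tri_mat :: "'m \<Rightarrow> complex mat" where "tri_mat g = 1\<^sub>m 1"

text \<open>Induction = left adjoint of restriction along H -> G.  Pointwise, (d, rho) with
  unit eta : V -> Res (d, rho) is Ind V iff it is a universal arrow from V to the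
  restriction functor: every H-map f : V -> Res W factors uniquely as
  Res phi o eta with phi : (d, rho) -> W a G-map.\<close>
definition is_induced_rep :: "('o, 'm) groupoid \<Rightarrow> 'm set \<Rightarrow> ('o \<Rightarrow> nat) \<Rightarrow> ('m \<Rightarrow> complex mat)
    \<Rightarrow> ('o \<Rightarrow> nat) \<Rightarrow> ('m \<Rightarrow> complex mat) \<Rightarrow> ('o \<Rightarrow> complex mat) \<Rightarrow> bool" where
  "is_induced_rep G S d0 \<rho>0 d \<rho> \<eta> \<longleftrightarrow>
     is_rep G (Arr G) d \<rho> \<and> is_nat_trans G S d0 \<rho>0 d \<rho> \<eta> \<and>
     (\<forall>(d' :: 'o \<Rightarrow> nat) (\<rho>' :: 'm \<Rightarrow> complex mat) f.
        is_rep G (Arr G) d' \<rho>' \<longrightarrow> is_nat_trans G S d0 \<rho>0 d' \<rho>' f \<longrightarrow>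
        (\<exists>\<phi>. is_nat_trans G (Arr G) d \<rho> d' \<rho>' \<phi> \<and> (\<forall>x\<in>Obj G. \<phi> x * \<eta> x = f x) \<and>
           (\<forall>\<psi>. is_nat_trans G (Arr G) d \<rho> d' \<rho>' \<psi> \<and> (\<forall>x\<in>Obj G. \<psi> x * \<eta> x = f x)
                 \<longrightarrow> (\<forall>x\<in>Obj G. \<psi> x = \<phi> x))))"

text \<open>A chosen ordering of the basis G/H(x) of the free vector space C[G/H](x).\<close>
definition quot_enum :: "('o, 'm) groupoid \<Rightarrow> 'm set \<Rightarrow> 'o \<Rightarrow> nat \<Rightarrow> 'm set" where
  "quot_enum G S x = (SOME e. bij_betw e {..<card (quot_set G S x)} (quot_set G S x))"

definition lin_dim :: "('o, 'm) groupoid \<Rightarrow> 'm set \<Rightarrow> 'o \<Rightarrow> nat" where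
  "lin_dim G S x = card (quot_set G S x)"

text \<open>Matrix of F(g) : C[G/H(x)] -> C[G/H(y)] for g : x -> y in the chosen bases:
  the basis vector of class c goes to the basis vector of class gc.\<close>
definition lin_mat :: "('o, 'm) groupoid \<Rightarrow> 'm set \<Rightarrow> 'm \<Rightarrow> complex mat" where
  "lin_mat G S g = mat (lin_dim G S (cod G g)) (lin_dim G S (dom G g))
     (\<lambda>(i, j). if quot_enum G S (cod G g) i = quot_act G S g (quot_enum G S (dom G g) j)
               then 1 else 0)"

end

theory Submission imports Defs begin

locale grpd =
  fixes G :: "('o, 'm) groupoid" and S :: "'m set"
  assumes fin: "is_finite_groupoid G" and wide: "is_wide_subgroupoid G S"
begin

lemma finA: "finite (Arr G)" using fin unfolding is_finite_groupoid_def by blast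
lemma dom_obj: "g \<in> Arr G \<Longrightarrow> dom G g \<in> Obj G" using fin unfolding is_finite_groupoid_def by blast
lemma cod_obj: "g \<in> Arr G \<Longrightarrow> cod G g \<in> Obj G" using fin unfolding is_finite_groupoid_def by blast
lemma ide_arr: "x \<in> Obj G \<Longrightarrow> ide G x \<in> Arr G" using fin unfolding is_finite_groupoid_def by blast
lemma ide_dom: "x \<in> Obj G \<Longrightarrow> dom G (ide G x) = x" using fin unfolding is_finite_groupoid_def by blast
lemma ide_cod: "x \<in> Obj G \<Longrightarrow> cod G (ide G x) = x" using fin unfolding is_finite_groupoid_def by blast
lemma comp_arr: "g \<in> Arr G \<Longrightarrow> h \<in> Arr G \<Longrightarrow> dom G g = cod G h \<Longrightarrow> comp G g h \<in> Arr G"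
  using fin unfolding is_finite_groupoid_def by blast
lemma comp_dom: "g \<in> Arr G \<Longrightarrow> h \<in> Arr G \<Longrightarrow> dom G g = cod G h \<Longrightarrow> dom G (comp G g h) = dom G h"
  using fin unfolding is_finite_groupoid_def by blast
lemma comp_cod: "g \<in> Arr G \<Longrightarrow> h \<in> Arr G \<Longrightarrow> dom G g = cod G h \<Longrightarrow> cod G (comp G g h) = cod G g"
  using fin unfolding is_finite_groupoid_def by blast
lemma assoc: "g \<in> Arr G \<Longrightarrow> h \<in> Arr G \<Longrightarrow> k \<in> Arr G \<Longrightarrow> dom G g = cod G h \<Longrightarrow> dom G h = cod G k \<Longrightarrow>
   comp G (comp G g h) k = comp G g (comp G h k)"
  using fin unfolding is_finite_groupoid_def by blast
lemma idl: "g \<in> Arr G \<Longrightarrow> comp G (ide G (cod G g)) g = g" using fin unfolding is_finite_groupoid_def by blast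
lemma idr: "g \<in> Arr G \<Longrightarrow> comp G g (ide G (dom G g)) = g" using fin unfolding is_finite_groupoid_def by blast

lemma inv_ex: "g \<in> Arr G \<Longrightarrow> \<exists>h\<in>Arr G. dom G h = cod G g \<and> cod G h = dom G g \<and>
        comp G h g = ide G (dom G g) \<and> comp G g h = ide G (cod G g)"
  using fin unfolding is_finite_groupoid_def by blast

lemma ginv_prop: assumes g: "g \<in> Arr G"
  shows "ginv G g \<in> Arr G \<and> dom G (ginv G g) = cod G g \<and> cod G (ginv G g) = dom G g \<and>
        comp G (ginv G g) g = ide G (dom G g) \<and> comp G g (ginv G g) = ide G (cod G g)"
proof -
  let ?P = "\<lambda>h. h \<in> Arr G \<and> dom G h = cod G g \<and> cod G h = dom G g \<and>
        comp G h g = ide G (dom G g) \<and> comp G g h = ide G (cod G g)"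
  have "\<exists>!h. ?P h"
  proof -
    obtain h where h: "?P h" using inv_ex[OF g] by blast
    moreover have "h' = h" if h': "?P h'" for h'
    proof -
      have "h' = comp G h' (ide G (cod G g))" using idr[of h'] h' by simp
      also have "\<dots> = comp G h' (comp G g h)" using h by simp
      also have "\<dots> = comp G (comp G h' g) h" using assoc[of h' g h] h h' g by simp
      also have "\<dots> = comp G (ide G (dom G g)) h" using h' by simp
      also have "\<dots> = h" using idl[of h] h by simp
      finally show ?thesis .
    qed
    ultimately show ?thesis by blast
  qed
  hence "?P (THE h. ?P h)" by (rule theI')
  thus ?thesis unfolding ginv_def .
qed

lemma S_arr: "s \<in> S \<Longrightarrow> s \<in> Arr G" using wide unfolding is_wide_subgroupoid_def is_subgroupoid_def by blast
lemma S_ide: "x \<in> Obj G \<Longrightarrow> ide G x \<in> S" using wide unfolding is_wide_subgroupoid_def by blast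
lemma S_comp: "s \<in> S \<Longrightarrow> t \<in> S \<Longrightarrow> dom G s = cod G t \<Longrightarrow> comp G s t \<in> S"
  using wide unfolding is_wide_subgroupoid_def is_subgroupoid_def by blast
lemma S_inv: "s \<in> S \<Longrightarrow> ginv G s \<in> S"
  using wide unfolding is_wide_subgroupoid_def is_subgroupoid_def by blast

definition rel where "rel a b \<longleftrightarrow> a \<in> Arr G \<and> (\<exists>s\<in>S. cod G s = dom G a \<and> b = comp G a s)"

lemma rel_iff: assumes a: "a \<in> Arr G" and b: "b \<in> Arr G" and c: "cod G a = cod G b"
  shows "comp G (ginv G a) b \<in> S \<longleftrightarrow> rel a b"
proof
  assume h: "comp G (ginv G a) b \<in> S"
  have "comp G a (comp G (ginv G a) b) = comp G (comp G a (ginv G a)) b"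
    using assoc[of a "ginv G a" b] ginv_prop[OF a] a b c by simp
  also have "\<dots> = b" using ginv_prop[OF a] idl[OF b] c by simp
  finally show "rel a b" unfolding rel_def using a h ginv_prop[OF a] comp_cod[of "ginv G a" b] b c
    by (metis)
next
  assume "rel a b"
  then obtain s where s: "s \<in> S" "cod G s = dom G a" "b = comp G a s" unfolding rel_def by blast
  have "comp G (ginv G a) b = comp G (comp G (ginv G a) a) s"
    using assoc[of "ginv G a" a s] ginv_prop[OF a] a s S_arr by simp
  also have "\<dots> = s" using ginv_prop[OF a] idl[of s] s S_arr by simp
  finally show "comp G (ginv G a) b \<in> S" using s by simp
qed

lemma rel_arr: "rel a b \<Longrightarrow> b \<in> Arr G \<and> cod G b = cod G a"
  unfolding rel_def using S_arr comp_arr comp_cod by metis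

lemma rel_refl: "a \<in> Arr G \<Longrightarrow> rel a a"
  unfolding rel_def using S_ide[OF dom_obj] idr ide_cod dom_obj by metis

lemma rel_sym: assumes "rel a b" shows "rel b a"
proof -
  obtain s where s: "a \<in> Arr G" "s \<in> S" "cod G s = dom G a" "b = comp G a s" using assms unfolding rel_def by blast
  have sA: "s \<in> Arr G" using S_arr s by blast
  have bA: "b \<in> Arr G" using s sA comp_arr by metis
  have "comp G b (ginv G s) = comp G a (comp G s (ginv G s))"
    using assoc[of a s "ginv G s"] s sA ginv_prop[OF sA] by simp
  also have "\<dots> = a" using ginv_prop[OF sA] s idr by metis
  finally show ?thesis unfolding rel_def using bA S_inv s ginv_prop[OF sA] comp_dom sA
    by metis
qed

lemma rel_trans: assumes "rel a b" "rel b c" shows "rel a c"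
proof -
  obtain s where s: "a \<in> Arr G" "s \<in> S" "cod G s = dom G a" "b = comp G a s" using assms unfolding rel_def by blast
  obtain t where t: "b \<in> Arr G" "t \<in> S" "cod G t = dom G b" "c = comp G b t" using assms unfolding rel_def by blast
  have sA: "s \<in> Arr G" "t \<in> Arr G" using S_arr s t by blast+
  have db: "dom G b = dom G s" using comp_dom s sA by metis
  have "c = comp G a (comp G s t)" using assoc[of a s t] s t sA db by simp
  moreover have "comp G s t \<in> S" using S_comp s t db by simp
  moreover have "cod G (comp G s t) = dom G a" using comp_cod sA s t db by metis
  ultimately show ?thesis unfolding rel_def using s by blast
qed

definition cls where "cls a = left_class G S (cod G a) a"

lemma cls_eq: assumes a: "a \<in> Arr G" shows "cls a = {b. rel a b}"
proof (rule Set.set_eqI)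
  fix b
  have "b \<in> cls a \<longleftrightarrow> b \<in> Arr G \<and> cod G b = cod G a \<and> comp G (ginv G a) b \<in> S"
    unfolding cls_def left_class_def Mor_to_def by auto
  also have "\<dots> \<longleftrightarrow> rel a b" using rel_iff[OF a] rel_arr[of a b] by auto
  finally show "b \<in> cls a \<longleftrightarrow> b \<in> {b. rel a b}" by simp
qed

lemma cls_self: "a \<in> Arr G \<Longrightarrow> a \<in> cls a" using cls_eq rel_refl by blast

lemma cls_eq_iff: assumes "a \<in> Arr G" "b \<in> Arr G" shows "cls a = cls b \<longleftrightarrow> rel a b"
proof
  assume "cls a = cls b"
  thus "rel a b" using cls_self[OF assms(2)] cls_eq[OF assms(1)] by auto
next
  assume r: "rel a b"
  show "cls a = cls b" unfolding cls_eq[OF assms(1)] cls_eq[OF assms(2)]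
    using r rel_sym rel_trans by blast
qed

lemma cls_mem: assumes "a \<in> Arr G" "b \<in> cls a" shows "cls b = cls a \<and> b \<in> Arr G \<and> cod G b = cod G a"
proof -
  have r: "rel a b" using assms cls_eq by auto
  hence "b \<in> Arr G \<and> cod G b = cod G a" using rel_arr by blast
  thus ?thesis using cls_eq_iff[of b a] r rel_sym assms(1) by auto
qed

lemma quot_set_eq: "quot_set G S x = cls ` Mor_to G x"
  unfolding quot_set_def cls_def Mor_to_def by auto

lemma quot_act_cls: assumes g: "g \<in> Arr G" and a: "a \<in> Arr G" and d: "dom G g = cod G a"
  shows "quot_act G S g (cls a) = cls (comp G g a)"
proof -
  define a' where "a' = (SOME a'. a' \<in> cls a)"
  have "a' \<in> cls a" unfolding a'_def using cls_self[OF a] by (rule someI)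
  hence r: "rel a a'" and a'A: "a' \<in> Arr G" and ca: "cod G a' = cod G a" using cls_eq[OF a] rel_arr by auto
  obtain s where s: "s \<in> S" "cod G s = dom G a" "a' = comp G a s" using r unfolding rel_def by blast
  have sA: "s \<in> Arr G" using S_arr s by blast
  have "comp G g a' = comp G (comp G g a) s" using assoc[of g a s] g a sA s d by simp
  hence "rel (comp G g a) (comp G g a')" unfolding rel_def using s comp_arr comp_dom g a d by metis
  hence "cls (comp G g a') = cls (comp G g a)" using cls_eq_iff comp_arr g a d a'A ca rel_sym by metis
  moreover have "cod G (comp G g a') = cod G g" using comp_cod g a'A d ca by metis
  ultimately have "left_class G S (cod G g) (comp G g a') = cls (comp G g a)" unfolding cls_def by simp
  thus ?thesis unfolding quot_act_def a'_def[symmetric] .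
qed


lemma cls_in_quot: "a \<in> Arr G \<Longrightarrow> cls a \<in> quot_set G S (cod G a)"
  unfolding quot_set_eq Mor_to_def by auto

lemma qfin: "finite (quot_set G S x)"
  unfolding quot_set_eq Mor_to_def using finA by auto

lemma enum_bij: "bij_betw (quot_enum G S x) {..<lin_dim G S x} (quot_set G S x)"
proof -
  have "\<exists>e. bij_betw e {..<card (quot_set G S x)} (quot_set G S x)"
    using ex_bij_betw_nat_finite[OF qfin[of x]] by (simp add: lessThan_atLeast0)
  thus ?thesis unfolding quot_enum_def lin_dim_def by (rule someI_ex)
qed

definition idx where "idx x c = the_inv_into {..<lin_dim G S x} (quot_enum G S x) c"

lemma enum_in: "j < lin_dim G S x \<Longrightarrow> quot_enum G S x j \<in> quot_set G S x"
  using enum_bij[of x] unfolding bij_betw_def by auto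

lemma idx_lt: "c \<in> quot_set G S x \<Longrightarrow> idx x c < lin_dim G S x"
  using enum_bij[of x] unfolding idx_def bij_betw_def by (auto intro!: the_inv_into_into[where B="{..<lin_dim G S x}", simplified])

lemma enum_idx: "c \<in> quot_set G S x \<Longrightarrow> quot_enum G S x (idx x c) = c"
  using enum_bij[of x] unfolding idx_def bij_betw_def by (auto intro!: f_the_inv_into_f)

lemma idx_enum: "j < lin_dim G S x \<Longrightarrow> idx x (quot_enum G S x j) = j"
  using enum_bij[of x] unfolding idx_def bij_betw_def by (auto intro!: the_inv_into_f_f)

lemma enum_eq_iff: "i < lin_dim G S x \<Longrightarrow> c \<in> quot_set G S x \<Longrightarrow> quot_enum G S x i = c \<longleftrightarrow> i = idx x c"
  using idx_enum enum_idx by metis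

definition rep where "rep x j = (SOME a. a \<in> quot_enum G S x j)"

lemma rep_prop: assumes j: "j < lin_dim G S x"
  shows "rep x j \<in> Arr G \<and> cod G (rep x j) = x \<and> cls (rep x j) = quot_enum G S x j"
proof -
  obtain a where a: "a \<in> Arr G" "cod G a = x" "quot_enum G S x j = cls a"
    using enum_in[OF j] unfolding quot_set_eq Mor_to_def by auto
  have "rep x j \<in> cls a" unfolding rep_def a(3) using cls_self[OF a(1)] by (rule someI)
  thus ?thesis using cls_mem[OF a(1)] a by auto
qed

lemma cls_comp_cong: assumes g: "g \<in> Arr G" and a: "a \<in> Arr G" "a' \<in> Arr G" and d: "dom G g = cod G a"
  and e: "cls a = cls a'"
  shows "cls (comp G g a) = cls (comp G g a')"
proof -
  have "cod G a' = cod G a" using e cls_eq_iff a rel_arr by metis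
  thus ?thesis using quot_act_cls[OF g a(1) d] quot_act_cls[OF g a(2)] d e by metis
qed

definition sig where "sig g j = idx (cod G g) (cls (comp G g (rep (dom G g) j)))"

lemma rep_comp: assumes g: "g \<in> Arr G" and j: "j < lin_dim G S (dom G g)"
  shows "comp G g (rep (dom G g) j) \<in> Arr G" "cod G (comp G g (rep (dom G g) j)) = cod G g"
  using rep_prop[OF j] g comp_arr comp_cod by metis+

lemma sig_lt: assumes g: "g \<in> Arr G" and j: "j < lin_dim G S (dom G g)"
  shows "sig g j < lin_dim G S (cod G g)"
  unfolding sig_def using idx_lt cls_in_quot rep_comp[OF g j] by metis

lemma enum_sig: assumes g: "g \<in> Arr G" and j: "j < lin_dim G S (dom G g)"
  shows "quot_enum G S (cod G g) (sig g j) = cls (comp G g (rep (dom G g) j))"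
  unfolding sig_def using enum_idx cls_in_quot rep_comp[OF g j] by metis

definition pm :: "nat \<Rightarrow> nat \<Rightarrow> (nat \<Rightarrow> nat) \<Rightarrow> complex mat" where
  "pm m n f = mat m n (\<lambda>(i,j). if i = f j then 1 else 0)"

lemma pm_carrier: "pm m n f \<in> carrier_mat m n" unfolding pm_def by auto

lemma mult_pm: assumes A: "A \<in> carrier_mat m n" and f: "\<And>j. j < k \<Longrightarrow> f j < n"
  shows "A * pm n k f = mat m k (\<lambda>(i,j). A $$ (i, f j))"
proof (rule eq_matI)
  fix i j assume i: "i < dim_row (mat m k (\<lambda>(i,j). A $$ (i, f j)))" and j: "j < dim_col (mat m k (\<lambda>(i,j). A $$ (i, f j)))"
  hence i: "i < m" and j: "j < k" by auto
  have "(A * pm n k f) $$ (i,j) = row A i \<bullet> col (pm n k f) j" using i j A by (simp add: pm_def)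
  also have "\<dots> = (\<Sum>l\<in>{0..<n}. if l = f j then A $$ (i,l) else 0)"
    unfolding scalar_prod_def using A i j by (intro sum.cong) (auto simp: pm_def)
  also have "\<dots> = A $$ (i, f j)" using f[OF j] by simp
  finally show "(A * pm n k f) $$ (i,j) = mat m k (\<lambda>(i,j). A $$ (i, f j)) $$ (i,j)" using i j by simp
qed (insert A, auto simp: pm_def)

lemma pm_pm: assumes f: "\<And>j. j < n \<Longrightarrow> f j < m" and g: "\<And>j. j < k \<Longrightarrow> g j < n"
  shows "pm m n f * pm n k g = pm m k (\<lambda>j. f (g j))"
proof -
  have "pm m n f * pm n k g = mat m k (\<lambda>(i,j). pm m n f $$ (i, g j))" by (rule mult_pm[OF pm_carrier g])
  also have "\<dots> = pm m k (\<lambda>j. f (g j))" by (rule eq_matI) (auto simp: pm_def g)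
  finally show ?thesis .
qed

lemma pm_cong: assumes "\<And>j. j < k \<Longrightarrow> f j = g j" shows "pm m k f = pm m k g"
  by (rule eq_matI) (auto simp: pm_def assms)

lemma pm_id: assumes "\<And>j. j < n \<Longrightarrow> f j = j" shows "pm n n f = 1\<^sub>m n"
  by (rule eq_matI) (auto simp: pm_def assms)

lemma lin_mat_pm: assumes g: "g \<in> Arr G"
  shows "lin_mat G S g = pm (lin_dim G S (cod G g)) (lin_dim G S (dom G g)) (sig g)"
  unfolding lin_mat_def pm_def
proof (rule eq_matI)
  fix i j assume "i < dim_row (mat (lin_dim G S (cod G g)) (lin_dim G S (dom G g)) (\<lambda>(i, j). if i = sig g j then 1 else 0))"
     "j < dim_col (mat (lin_dim G S (cod G g)) (lin_dim G S (dom G g)) (\<lambda>(i, j). if i = sig g j then 1 else 0))"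
  hence i: "i < lin_dim G S (cod G g)" and j: "j < lin_dim G S (dom G g)" by auto
  have e: "quot_act G S g (quot_enum G S (dom G g) j) = cls (comp G g (rep (dom G g) j))"
    using rep_prop[OF j] quot_act_cls[OF g] g by metis
  have "quot_enum G S (cod G g) i = quot_act G S g (quot_enum G S (dom G g) j) \<longleftrightarrow> i = sig g j"
    unfolding e sig_def using enum_eq_iff[OF i] cls_in_quot rep_comp[OF g j] by metis
  thus "mat (lin_dim G S (cod G g)) (lin_dim G S (dom G g))
          (\<lambda>(i, j). if quot_enum G S (cod G g) i = quot_act G S g (quot_enum G S (dom G g) j) then 1 else 0) $$ (i, j) =
         mat (lin_dim G S (cod G g)) (lin_dim G S (dom G g)) (\<lambda>(i, j). if i = sig g j then 1 else 0) $$ (i, j)"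
    using i j by simp
qed auto

lemma sig_ide: assumes x: "x \<in> Obj G" and j: "j < lin_dim G S x" shows "sig (ide G x) j = j"
proof -
  have r: "rep x j \<in> Arr G" "cod G (rep x j) = x" "cls (rep x j) = quot_enum G S x j" using rep_prop[OF j] by auto
  have "comp G (ide G x) (rep x j) = rep x j" using idl[OF r(1)] r(2) by simp
  thus ?thesis unfolding sig_def using ide_dom[OF x] ide_cod[OF x] r(3) idx_enum[OF j] by simp
qed

lemma sig_comp: assumes g: "g \<in> Arr G" and h: "h \<in> Arr G" and d: "dom G g = cod G h"
  and j: "j < lin_dim G S (dom G h)"
  shows "sig (comp G g h) j = sig g (sig h j)"
proof -
  have gh: "comp G g h \<in> Arr G" "dom G (comp G g h) = dom G h" "cod G (comp G g h) = cod G g"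
    using comp_arr comp_dom comp_cod g h d by metis+
  define r where "r = rep (dom G h) j"
  have r: "r \<in> Arr G" "cod G r = dom G h" "cls r = quot_enum G S (dom G h) j" using rep_prop[OF j] r_def by auto
  have sj: "sig h j < lin_dim G S (dom G g)" using sig_lt[OF h j] d by simp
  define r' where "r' = rep (dom G g) (sig h j)"
  have r': "r' \<in> Arr G" "cls r' = cls (comp G h r)" "cod G r' = dom G g"
    using rep_prop[OF sj] enum_sig[OF h j] d r'_def r_def by auto
  have hr: "comp G h r \<in> Arr G" "cod G (comp G h r) = cod G h" using comp_arr comp_cod h r by metis+
  have "cls (comp G g r') = cls (comp G g (comp G h r))"
    using cls_comp_cong[OF g r'(1) hr(1) r'(3)[symmetric] r'(2)] .
  also have "\<dots> = cls (comp G (comp G g h) r)" using assoc[OF g h r(1) d r(2)[symmetric]] by simp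
  finally have "cls (comp G g r') = cls (comp G (comp G g h) r)" .
  thus ?thesis unfolding sig_def[of g "sig h j"] sig_def[of "comp G g h" j] gh r_def[symmetric] r'_def[symmetric]
    by simp
qed

lemma lin_rep: "is_rep G (Arr G) (lin_dim G S) (lin_mat G S)"
  unfolding is_rep_def
proof (intro conjI ballI impI)
  fix g assume "g \<in> Arr G"
  thus "lin_mat G S g \<in> carrier_mat (lin_dim G S (cod G g)) (lin_dim G S (dom G g))"
    unfolding lin_mat_def by simp
next
  fix x assume x: "x \<in> Obj G"
  show "lin_mat G S (ide G x) = 1\<^sub>m (lin_dim G S x)"
    unfolding lin_mat_pm[OF ide_arr[OF x]] ide_dom[OF x] ide_cod[OF x]
    by (rule pm_id) (simp add: sig_ide x)
next
  fix g h assume g: "g \<in> Arr G" and h: "h \<in> Arr G" and d: "dom G g = cod G h"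
  have gh: "comp G g h \<in> Arr G" "dom G (comp G g h) = dom G h" "cod G (comp G g h) = cod G g"
    using comp_arr comp_dom comp_cod g h d by metis+
  show "lin_mat G S (comp G g h) = lin_mat G S g * lin_mat G S h"
    unfolding lin_mat_pm[OF g] lin_mat_pm[OF h] lin_mat_pm[OF gh(1)] gh
  proof -
    have "pm (lin_dim G S (cod G g)) (lin_dim G S (dom G g)) (sig g) * pm (lin_dim G S (cod G h)) (lin_dim G S (dom G h)) (sig h)
      = pm (lin_dim G S (cod G g)) (lin_dim G S (dom G h)) (\<lambda>j. sig g (sig h j))"
      unfolding d[symmetric] by (rule pm_pm) (use sig_lt[OF g] sig_lt[OF h] d in auto)
    also have "\<dots> = pm (lin_dim G S (cod G g)) (lin_dim G S (dom G h)) (sig (comp G g h))"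
      by (rule pm_cong) (simp add: sig_comp[OF g h d])
    finally show "pm (lin_dim G S (cod G g)) (lin_dim G S (dom G h)) (sig (comp G g h)) =
       pm (lin_dim G S (cod G g)) (lin_dim G S (dom G g)) (sig g) * pm (lin_dim G S (cod G h)) (lin_dim G S (dom G h)) (sig h)" by simp
  qed
qed


definition eta where "eta x = pm (lin_dim G S x) 1 (\<lambda>_. idx x (cls (ide G x)))"

lemma cls_ide_in: "x \<in> Obj G \<Longrightarrow> cls (ide G x) \<in> quot_set G S x"
  using cls_in_quot[OF ide_arr] ide_cod by metis

lemma eta_carrier: "x \<in> Obj G \<Longrightarrow> eta x \<in> carrier_mat (lin_dim G S x) 1"
  unfolding eta_def by (rule pm_carrier)

lemma lin_eta: assumes a: "a \<in> Arr G"
  shows "lin_mat G S a * eta (dom G a) = pm (lin_dim G S (cod G a)) 1 (\<lambda>_. idx (cod G a) (cls a))"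
proof -
  define y where "y = dom G a"
  have y: "y \<in> Obj G" using dom_obj[OF a] y_def by simp
  define k where "k = idx y (cls (ide G y))"
  have k: "k < lin_dim G S y" unfolding k_def using idx_lt cls_ide_in[OF y] by blast
  have "lin_mat G S a * eta y = pm (lin_dim G S (cod G a)) 1 (\<lambda>_. sig a k)"
    unfolding lin_mat_pm[OF a] y_def[symmetric] eta_def k_def[symmetric]
    by (rule pm_pm) (use sig_lt[OF a] k y_def in auto)
  also have "sig a k = idx (cod G a) (cls a)"
  proof -
    have r: "rep y k \<in> Arr G" "cod G (rep y k) = y" "cls (rep y k) = cls (ide G y)"
      using rep_prop[OF k] enum_idx[OF cls_ide_in[OF y]] k_def by auto
    have "cls (comp G a (rep y k)) = cls (comp G a (ide G y))"
      by (rule cls_comp_cong[OF a r(1) ide_arr[OF y]]) (use r y_def in auto)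
    also have "comp G a (ide G y) = a" using idr[OF a] y_def by simp
    finally show ?thesis unfolding sig_def y_def[symmetric] by simp
  qed
  finally show ?thesis unfolding y_def .
qed

lemma eta_nat: "is_nat_trans G S tri_dim tri_mat (lin_dim G S) (lin_mat G S) eta"
  unfolding is_nat_trans_def
proof (intro conjI ballI)
  fix x assume "x \<in> Obj G"
  thus "eta x \<in> carrier_mat (lin_dim G S x) (tri_dim x)" unfolding tri_dim_def by (rule eta_carrier)
next
  fix s assume s: "s \<in> S"
  have sA: "s \<in> Arr G" using S_arr[OF s] .
  have c: "cod G s \<in> Obj G" using cod_obj[OF sA] .
  have "rel (ide G (cod G s)) s" unfolding rel_def
    using ide_arr[OF c] s ide_dom[OF c] idl[OF sA] by metis
  hence e: "cls s = cls (ide G (cod G s))" using cls_eq_iff[OF sA ide_arr[OF c]] rel_sym by blast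
  have "eta (cod G s) * tri_mat s = eta (cod G s)" unfolding tri_mat_def using eta_carrier[OF c] by simp
  also have "\<dots> = lin_mat G S s * eta (dom G s)" by (subst lin_eta[OF sA]) (simp add: eta_def e)
  finally show "eta (cod G s) * tri_mat s = lin_mat G S s * eta (dom G s)" .
qed

lemma univ:
  assumes R: "is_rep G (Arr G) d' \<rho>'" and F: "is_nat_trans G S tri_dim tri_mat d' \<rho>' f"
  shows "\<exists>\<phi>. is_nat_trans G (Arr G) (lin_dim G S) (lin_mat G S) d' \<rho>' \<phi> \<and> (\<forall>x\<in>Obj G. \<phi> x * eta x = f x) \<and>
           (\<forall>\<psi>. is_nat_trans G (Arr G) (lin_dim G S) (lin_mat G S) d' \<rho>' \<psi> \<and> (\<forall>x\<in>Obj G. \<psi> x * eta x = f x)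
                 \<longrightarrow> (\<forall>x\<in>Obj G. \<psi> x = \<phi> x))"
proof -
  have Rc: "\<And>g. g \<in> Arr G \<Longrightarrow> \<rho>' g \<in> carrier_mat (d' (cod G g)) (d' (dom G g))"
    using R unfolding is_rep_def by blast
  have Ri: "\<And>x. x \<in> Obj G \<Longrightarrow> \<rho>' (ide G x) = 1\<^sub>m (d' x)"
    using R ide_arr unfolding is_rep_def by blast
  have Rm: "\<And>g h. g \<in> Arr G \<Longrightarrow> h \<in> Arr G \<Longrightarrow> dom G g = cod G h \<Longrightarrow> \<rho>' (comp G g h) = \<rho>' g * \<rho>' h"
    using R unfolding is_rep_def by blast
  have Fc: "\<And>x. x \<in> Obj G \<Longrightarrow> f x \<in> carrier_mat (d' x) 1"
    using F unfolding is_nat_trans_def tri_dim_def by blast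
  have Fn: "f (cod G s) = \<rho>' s * f (dom G s)" if s: "s \<in> S" for s
  proof -
    have "f (cod G s) * tri_mat s = \<rho>' s * f (dom G s)" using F s unfolding is_nat_trans_def by blast
    moreover have "f (cod G s) * tri_mat s = f (cod G s)" unfolding tri_mat_def
      using Fc[OF cod_obj[OF S_arr[OF s]]] by simp
    ultimately show ?thesis by simp
  qed
  define v where "v a = \<rho>' a * f (dom G a)" for a
  have vc: "v a \<in> carrier_mat (d' (cod G a)) 1" if a: "a \<in> Arr G" for a
    unfolding v_def using Rc[OF a] Fc[OF dom_obj[OF a]] by simp
  have v_comp: "v (comp G g a) = \<rho>' g * v a" if g: "g \<in> Arr G" and a: "a \<in> Arr G" and d: "dom G g = cod G a" for g a
  proof -
    have "v (comp G g a) = (\<rho>' g * \<rho>' a) * f (dom G a)"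
      unfolding v_def using Rm[OF g a d] comp_dom[OF g a d] by simp
    also have "\<dots> = \<rho>' g * (\<rho>' a * f (dom G a))"
      using Rc[OF g] Rc[OF a] Fc[OF dom_obj[OF a]] d by (metis assoc_mult_mat)
    finally show ?thesis unfolding v_def .
  qed
  have v_ide: "v (ide G x) = f x" if x: "x \<in> Obj G" for x
    unfolding v_def using Ri[OF x] ide_dom[OF x] Fc[OF x] by simp
  have v_cong: "v a = v b" if a: "a \<in> Arr G" and b: "b \<in> Arr G" and e: "cls a = cls b" for a b
  proof -
    have "rel a b" using cls_eq_iff a b e by blast
    then obtain s where s: "s \<in> S" "cod G s = dom G a" "b = comp G a s" unfolding rel_def by blast
    have sA: "s \<in> Arr G" using S_arr[OF s(1)] .
    have "v b = \<rho>' a * v s" using v_comp[OF a sA] s by simp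
    also have "v s = f (dom G a)" unfolding v_def using Fn[OF s(1)] s(2) by simp
    finally show ?thesis unfolding v_def by simp
  qed
  define \<phi> where "\<phi> x = mat (d' x) (lin_dim G S x) (\<lambda>(i,j). v (rep x j) $$ (i,0))" for x
  have phic: "\<phi> x \<in> carrier_mat (d' x) (lin_dim G S x)" for x unfolding \<phi>_def by simp
  have mult_phi: "M * \<phi> x = mat m (lin_dim G S x) (\<lambda>(i,j). (M * v (rep x j)) $$ (i,0))"
    if M: "M \<in> carrier_mat m (d' x)" for M m x
  proof (rule eq_matI)
    fix i j assume "i < dim_row (mat m (lin_dim G S x) (\<lambda>(i,j). (M * v (rep x j)) $$ (i,0)))"
      "j < dim_col (mat m (lin_dim G S x) (\<lambda>(i,j). (M * v (rep x j)) $$ (i,0)))"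
    hence i: "i < m" and j: "j < lin_dim G S x" by auto
    have r: "rep x j \<in> Arr G" "cod G (rep x j) = x" using rep_prop[OF j] by auto
    have vr: "v (rep x j) \<in> carrier_mat (d' x) 1" using vc[OF r(1)] r(2) by simp
    have "col (\<phi> x) j = col (v (rep x j)) 0"
      by (rule eq_vecI) (use j vr in \<open>auto simp: \<phi>_def\<close>)
    thus "(M * \<phi> x) $$ (i, j) = mat m (lin_dim G S x) (\<lambda>(i,j). (M * v (rep x j)) $$ (i,0)) $$ (i, j)"
      using i j M vr phic[of x] by simp
  qed (use M phic in auto)
  have phi_pm: "\<phi> x * pm (lin_dim G S x) k h = mat (d' x) k (\<lambda>(i,j). v (rep x (h j)) $$ (i,0))"
    if h: "\<And>j. j < k \<Longrightarrow> h j < lin_dim G S x" for x k h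
  proof -
    have "\<phi> x * pm (lin_dim G S x) k h = mat (d' x) k (\<lambda>(i,j). \<phi> x $$ (i, h j))"
      by (rule mult_pm[OF phic h])
    also have "\<dots> = mat (d' x) k (\<lambda>(i,j). v (rep x (h j)) $$ (i,0))"
      by (rule eq_matI) (auto simp: \<phi>_def h)
    finally show ?thesis .
  qed
  have nat: "is_nat_trans G (Arr G) (lin_dim G S) (lin_mat G S) d' \<rho>' \<phi>"
    unfolding is_nat_trans_def
  proof (intro conjI ballI)
    fix x show "\<phi> x \<in> carrier_mat (d' x) (lin_dim G S x)" by (rule phic)
  next
    fix g assume g: "g \<in> Arr G"
    have "\<phi> (cod G g) * lin_mat G S g = mat (d' (cod G g)) (lin_dim G S (dom G g)) (\<lambda>(i,j). v (rep (cod G g) (sig g j)) $$ (i,0))"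
      unfolding lin_mat_pm[OF g] by (rule phi_pm) (rule sig_lt[OF g])
    also have "\<dots> = mat (d' (cod G g)) (lin_dim G S (dom G g)) (\<lambda>(i,j). (\<rho>' g * v (rep (dom G g) j)) $$ (i,0))"
    proof (rule eq_matI)
      fix i j assume "i < dim_row (mat (d' (cod G g)) (lin_dim G S (dom G g)) (\<lambda>(i,j). (\<rho>' g * v (rep (dom G g) j)) $$ (i,0)))"
        "j < dim_col (mat (d' (cod G g)) (lin_dim G S (dom G g)) (\<lambda>(i,j). (\<rho>' g * v (rep (dom G g) j)) $$ (i,0)))"
      hence i: "i < d' (cod G g)" and j: "j < lin_dim G S (dom G g)" by auto
      have sl: "sig g j < lin_dim G S (cod G g)" using sig_lt[OF g j] .
      have r: "rep (dom G g) j \<in> Arr G" "cod G (rep (dom G g) j) = dom G g" using rep_prop[OF j] by auto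
      have r2: "rep (cod G g) (sig g j) \<in> Arr G" "cls (rep (cod G g) (sig g j)) = cls (comp G g (rep (dom G g) j))"
        using rep_prop[OF sl] enum_sig[OF g j] by auto
      have "v (rep (cod G g) (sig g j)) = v (comp G g (rep (dom G g) j))"
        using v_cong[OF r2(1) rep_comp(1)[OF g j] r2(2)] .
      also have "\<dots> = \<rho>' g * v (rep (dom G g) j)" using v_comp[OF g r(1) r(2)[symmetric]] .
      finally show "mat (d' (cod G g)) (lin_dim G S (dom G g)) (\<lambda>(i,j). v (rep (cod G g) (sig g j)) $$ (i,0)) $$ (i,j) =
          mat (d' (cod G g)) (lin_dim G S (dom G g)) (\<lambda>(i,j). (\<rho>' g * v (rep (dom G g) j)) $$ (i,0)) $$ (i,j)"
        using i j by simp
    qed auto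
    also have "\<dots> = \<rho>' g * \<phi> (dom G g)" using mult_phi[OF Rc[OF g]] by simp
    finally show "\<phi> (cod G g) * lin_mat G S g = \<rho>' g * \<phi> (dom G g)" .
  qed
  have tri: "\<phi> x * eta x = f x" if x: "x \<in> Obj G" for x
  proof -
    define k where "k = idx x (cls (ide G x))"
    have k: "k < lin_dim G S x" unfolding k_def using idx_lt cls_ide_in[OF x] by blast
    have r: "rep x k \<in> Arr G" "cls (rep x k) = cls (ide G x)"
      using rep_prop[OF k] enum_idx[OF cls_ide_in[OF x]] k_def by auto
    have vv: "v (rep x k) = f x" using v_cong[OF r(1) ide_arr[OF x] r(2)] v_ide[OF x] by simp
    have "\<phi> x * eta x = mat (d' x) 1 (\<lambda>(i,j). v (rep x k) $$ (i,0))"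
      unfolding eta_def k_def[symmetric] by (rule phi_pm) (use k in auto)
    also have "\<dots> = f x" unfolding vv by (rule eq_matI) (use Fc[OF x] in auto)
    finally show ?thesis .
  qed
  have uniq: "\<psi> x = \<phi> x" if psi: "is_nat_trans G (Arr G) (lin_dim G S) (lin_mat G S) d' \<rho>' \<psi>"
    and pe: "\<forall>x\<in>Obj G. \<psi> x * eta x = f x" and x: "x \<in> Obj G" for \<psi> x
  proof -
    have psic: "\<And>x. x \<in> Obj G \<Longrightarrow> \<psi> x \<in> carrier_mat (d' x) (lin_dim G S x)" using psi unfolding is_nat_trans_def by blast
    have psin: "\<And>g. g \<in> Arr G \<Longrightarrow> \<psi> (cod G g) * lin_mat G S g = \<rho>' g * \<psi> (dom G g)"
      using psi unfolding is_nat_trans_def by blast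
    show ?thesis
    proof (rule eq_matI)
      fix i j assume "i < dim_row (\<phi> x)" "j < dim_col (\<phi> x)"
      hence i: "i < d' x" and j: "j < lin_dim G S x" using phic[of x] by auto
      define a where "a = rep x j"
      have a: "a \<in> Arr G" "cod G a = x" "cls a = quot_enum G S x j" using rep_prop[OF j] a_def by auto
      define y where "y = dom G a"
      have y: "y \<in> Obj G" using dom_obj[OF a(1)] y_def by simp
      have le: "lin_mat G S a * eta y = pm (lin_dim G S x) 1 (\<lambda>_. j)"
        using lin_eta[OF a(1)] a idx_enum[OF j] y_def by simp
      have "\<psi> x * (lin_mat G S a * eta y) = (\<psi> x * lin_mat G S a) * eta y"
        using psic[OF x] lin_rep a(1) eta_carrier[OF y] a y_def unfolding is_rep_def
        by (metis assoc_mult_mat)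
      also have "\<dots> = (\<rho>' a * \<psi> y) * eta y" using psin[OF a(1)] a(2) y_def by simp
      also have "\<dots> = \<rho>' a * (\<psi> y * eta y)"
        using Rc[OF a(1)] psic[OF y] eta_carrier[OF y] y_def by (metis assoc_mult_mat)
      also have "\<dots> = v a" unfolding v_def using pe y y_def by simp
      finally have "\<psi> x * pm (lin_dim G S x) 1 (\<lambda>_. j) = v a" unfolding le .
      moreover have "\<psi> x * pm (lin_dim G S x) 1 (\<lambda>_. j) = mat (d' x) 1 (\<lambda>(i,_). \<psi> x $$ (i,j))"
        by (rule mult_pm[OF psic[OF x]]) (use j in auto)
      ultimately have "\<psi> x $$ (i,j) = v a $$ (i,0)"
        by (metis (no_types, lifting) i index_mat(1) case_prod_conv less_one)
      thus "\<psi> x $$ (i,j) = \<phi> x $$ (i,j)" unfolding \<phi>_def a_def using i j by simp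
    qed (use psic[OF x] phic[of x] in auto)
  qed
  show ?thesis using nat tri uniq by blast
qed

end

lemma square_of_inverse:
  fixes A B :: "complex mat"
  assumes A: "A \<in> carrier_mat m n" and B: "B \<in> carrier_mat n m"
    and AB: "A * B = 1\<^sub>m m" and BA: "B * A = 1\<^sub>m n"
  shows "m = n"
proof -
  have t1: "(\<Sum>i\<in>{0..<m}. (A * B) $$ (i,i)) = (\<Sum>i\<in>{0..<m}. \<Sum>k\<in>{0..<n}. A $$ (i,k) * B $$ (k,i))"
    using A B by (intro sum.cong) (auto simp: scalar_prod_def)
  have t2: "(\<Sum>k\<in>{0..<n}. (B * A) $$ (k,k)) = (\<Sum>k\<in>{0..<n}. \<Sum>i\<in>{0..<m}. B $$ (k,i) * A $$ (i,k))"
    using A B by (intro sum.cong) (auto simp: scalar_prod_def)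
  have "(\<Sum>i\<in>{0..<m}. \<Sum>k\<in>{0..<n}. A $$ (i,k) * B $$ (k,i)) = (\<Sum>k\<in>{0..<n}. \<Sum>i\<in>{0..<m}. B $$ (k,i) * A $$ (i,k))"
    by (subst sum.swap) (simp add: mult.commute)
  hence "(\<Sum>i\<in>{0..<m}. (A * B) $$ (i,i)) = (\<Sum>k\<in>{0..<n}. (B * A) $$ (k,k))" using t1 t2 by simp
  hence "(\<Sum>i\<in>{0..<m}. (1::complex)) = (\<Sum>k\<in>{0..<n}. (1::complex))" unfolding AB BA
    by (metis (no_types, lifting) atLeastLessThan_iff index_one_mat(1) sum.cong)
  hence "(of_nat m :: complex) = of_nat n" by simp
  thus ?thesis by simp
qed

lemma nat_comp:
  assumes fin: "is_finite_groupoid G"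
    and R1: "is_rep G (Arr G) d1 \<rho>1" and R2: "is_rep G (Arr G) d2 \<rho>2" and R3: "is_rep G (Arr G) d3 \<rho>3"
    and a: "is_nat_trans G (Arr G) d1 \<rho>1 d2 \<rho>2 \<alpha>" and b: "is_nat_trans G (Arr G) d2 \<rho>2 d3 \<rho>3 \<beta>"
  shows "is_nat_trans G (Arr G) d1 \<rho>1 d3 \<rho>3 (\<lambda>x. \<beta> x * \<alpha> x)"
  unfolding is_nat_trans_def
proof (intro conjI ballI)
  fix x assume "x \<in> Obj G"
  thus "\<beta> x * \<alpha> x \<in> carrier_mat (d3 x) (d1 x)" using a b unfolding is_nat_trans_def by auto
next
  fix g assume g: "g \<in> Arr G"
  have o: "dom G g \<in> Obj G" "cod G g \<in> Obj G" using fin g unfolding is_finite_groupoid_def by auto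
  have ca: "\<alpha> (dom G g) \<in> carrier_mat (d2 (dom G g)) (d1 (dom G g))" "\<alpha> (cod G g) \<in> carrier_mat (d2 (cod G g)) (d1 (cod G g))"
    using a o unfolding is_nat_trans_def by auto
  have cb: "\<beta> (dom G g) \<in> carrier_mat (d3 (dom G g)) (d2 (dom G g))" "\<beta> (cod G g) \<in> carrier_mat (d3 (cod G g)) (d2 (cod G g))"
    using b o unfolding is_nat_trans_def by auto
  have r: "\<rho>1 g \<in> carrier_mat (d1 (cod G g)) (d1 (dom G g))" "\<rho>2 g \<in> carrier_mat (d2 (cod G g)) (d2 (dom G g))"
     "\<rho>3 g \<in> carrier_mat (d3 (cod G g)) (d3 (dom G g))"
    using R1 R2 R3 g unfolding is_rep_def by auto
  have na: "\<alpha> (cod G g) * \<rho>1 g = \<rho>2 g * \<alpha> (dom G g)" using a g unfolding is_nat_trans_def by auto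
  have nb: "\<beta> (cod G g) * \<rho>2 g = \<rho>3 g * \<beta> (dom G g)" using b g unfolding is_nat_trans_def by auto
  have "\<beta> (cod G g) * \<alpha> (cod G g) * \<rho>1 g = \<beta> (cod G g) * (\<alpha> (cod G g) * \<rho>1 g)"
    using ca cb r by (metis assoc_mult_mat)
  also have "\<dots> = \<beta> (cod G g) * (\<rho>2 g * \<alpha> (dom G g))" using na by simp
  also have "\<dots> = (\<beta> (cod G g) * \<rho>2 g) * \<alpha> (dom G g)" using ca cb r by (metis assoc_mult_mat)
  also have "\<dots> = (\<rho>3 g * \<beta> (dom G g)) * \<alpha> (dom G g)" using nb by simp
  also have "\<dots> = \<rho>3 g * (\<beta> (dom G g) * \<alpha> (dom G g))" using ca cb r by (metis assoc_mult_mat)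
  finally show "\<beta> (cod G g) * \<alpha> (cod G g) * \<rho>1 g = \<rho>3 g * (\<beta> (dom G g) * \<alpha> (dom G g))" .
qed

lemma nat_id:
  assumes R: "is_rep G (Arr G) d \<rho>"
  shows "is_nat_trans G (Arr G) d \<rho> d \<rho> (\<lambda>x. 1\<^sub>m (d x))"
  unfolding is_nat_trans_def
proof (intro conjI ballI)
  fix g assume g: "g \<in> Arr G"
  have "\<rho> g \<in> carrier_mat (d (cod G g)) (d (dom G g))" using R g unfolding is_rep_def by auto
  thus "1\<^sub>m (d (cod G g)) * \<rho> g = \<rho> g * 1\<^sub>m (d (dom G g))" by simp
qed auto

lemma induced_roundtrip:
  assumes fin: "is_finite_groupoid G"
    and I1: "is_induced_rep G S d0 \<rho>0 d1 \<rho>1 \<eta>1" and I2: "is_induced_rep G S d0 \<rho>0 d2 \<rho>2 \<eta>2"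
    and a: "is_nat_trans G (Arr G) d1 \<rho>1 d2 \<rho>2 \<alpha>" and ae: "\<forall>x\<in>Obj G. \<alpha> x * \<eta>1 x = \<eta>2 x"
    and b: "is_nat_trans G (Arr G) d2 \<rho>2 d1 \<rho>1 \<beta>" and be: "\<forall>x\<in>Obj G. \<beta> x * \<eta>2 x = \<eta>1 x"
    and x: "x \<in> Obj G"
  shows "\<beta> x * \<alpha> x = 1\<^sub>m (d1 x)"
proof -
  have R1: "is_rep G (Arr G) d1 \<rho>1" and N1: "is_nat_trans G S d0 \<rho>0 d1 \<rho>1 \<eta>1"
    using I1 unfolding is_induced_rep_def by auto
  have R2: "is_rep G (Arr G) d2 \<rho>2" and N2: "is_nat_trans G S d0 \<rho>0 d2 \<rho>2 \<eta>2"
    using I2 unfolding is_induced_rep_def by auto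
  obtain \<phi> where U: "\<forall>\<psi>. is_nat_trans G (Arr G) d1 \<rho>1 d1 \<rho>1 \<psi> \<and> (\<forall>x\<in>Obj G. \<psi> x * \<eta>1 x = \<eta>1 x)
                 \<longrightarrow> (\<forall>x\<in>Obj G. \<psi> x = \<phi> x)"
    using I1 R1 N1 unfolding is_induced_rep_def by blast
  have c: "\<forall>y\<in>Obj G. (\<beta> y * \<alpha> y) * \<eta>1 y = \<eta>1 y"
  proof
    fix y assume y: "y \<in> Obj G"
    have "\<alpha> y \<in> carrier_mat (d2 y) (d1 y)" "\<beta> y \<in> carrier_mat (d1 y) (d2 y)" "\<eta>1 y \<in> carrier_mat (d1 y) (d0 y)"
      using a b N1 y unfolding is_nat_trans_def by auto
    hence "(\<beta> y * \<alpha> y) * \<eta>1 y = \<beta> y * (\<alpha> y * \<eta>1 y)" by (metis assoc_mult_mat)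
    thus "(\<beta> y * \<alpha> y) * \<eta>1 y = \<eta>1 y" using ae be y by simp
  qed
  have i: "\<forall>y\<in>Obj G. 1\<^sub>m (d1 y) * \<eta>1 y = \<eta>1 y"
    using N1 unfolding is_nat_trans_def by auto
  have "\<beta> x * \<alpha> x = \<phi> x" using U nat_comp[OF fin R1 R2 R1 a b] c x by blast
  moreover have "1\<^sub>m (d1 x) = \<phi> x" using U nat_id[OF R1] i x by blast
  ultimately show ?thesis by simp
qed

lemma induced_iso:
  assumes fin: "is_finite_groupoid G"
    and I1: "is_induced_rep G S d0 \<rho>0 d1 \<rho>1 \<eta>1" and I2: "is_induced_rep G S d0 \<rho>0 d2 \<rho>2 \<eta>2"
  shows "reps_iso G (Arr G) d1 \<rho>1 d2 \<rho>2"
proof -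
  have R1: "is_rep G (Arr G) d1 \<rho>1" and N1: "is_nat_trans G S d0 \<rho>0 d1 \<rho>1 \<eta>1"
    using I1 unfolding is_induced_rep_def by auto
  have R2: "is_rep G (Arr G) d2 \<rho>2" and N2: "is_nat_trans G S d0 \<rho>0 d2 \<rho>2 \<eta>2"
    using I2 unfolding is_induced_rep_def by auto
  obtain \<alpha> where a: "is_nat_trans G (Arr G) d1 \<rho>1 d2 \<rho>2 \<alpha>" and ae: "\<forall>x\<in>Obj G. \<alpha> x * \<eta>1 x = \<eta>2 x"
    using I1 R2 N2 unfolding is_induced_rep_def by blast
  obtain \<beta> where b: "is_nat_trans G (Arr G) d2 \<rho>2 d1 \<rho>1 \<beta>" and be: "\<forall>x\<in>Obj G. \<beta> x * \<eta>2 x = \<eta>1 x"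
    using I2 R1 N1 unfolding is_induced_rep_def by blast
  have "\<forall>x\<in>Obj G. invertible_mat (\<alpha> x)"
  proof
    fix x assume x: "x \<in> Obj G"
    have ba: "\<beta> x * \<alpha> x = 1\<^sub>m (d1 x)" by (rule induced_roundtrip[OF fin I1 I2 a ae b be x])
    have ab: "\<alpha> x * \<beta> x = 1\<^sub>m (d2 x)" by (rule induced_roundtrip[OF fin I2 I1 b be a ae x])
    have ca: "\<alpha> x \<in> carrier_mat (d2 x) (d1 x)" and cb: "\<beta> x \<in> carrier_mat (d1 x) (d2 x)"
      using a b x unfolding is_nat_trans_def by auto
    have eq: "d2 x = d1 x" by (rule square_of_inverse[OF ca cb ab ba])
    show "invertible_mat (\<alpha> x)" unfolding invertible_mat_def inverts_mat_def square_mat.simps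
      using ca cb ab ba eq by auto
  qed
  thus ?thesis unfolding reps_iso_def using a by blast
qed

theorem theorem4p2:
  fixes G :: "('o, 'm) groupoid" and S :: "'m set"
  assumes "is_finite_groupoid G"
    and "is_wide_subgroupoid G S"
    and "is_connected_subgroupoid G S"
  shows "(\<exists>\<eta>. is_induced_rep G S tri_dim tri_mat (lin_dim G S) (lin_mat G S) \<eta>) \<and>
         (\<forall>d \<rho> \<eta>. is_induced_rep G S tri_dim tri_mat d \<rho> \<eta> \<longrightarrow>
            reps_iso G (Arr G) (lin_dim G S) (lin_mat G S) d \<rho>)"
proof -
  interpret grpd G S using assms(1,2) by unfold_locales
  have I: "is_induced_rep G S tri_dim tri_mat (lin_dim G S) (lin_mat G S) eta"
    unfolding is_induced_rep_def using lin_rep eta_nat univ by blast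
  show ?thesis using I induced_iso[OF assms(1) I] by blast
qed

end
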